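(* Let $r$ be factorizable, $n\ge1$, $\tilde r=r^{(n)}$, and $\tilde{\mathfrak f}_\pm=\mathrm{Im}(\tilde r_\pm)\subset\mathfrak g^n$. If $n=2m$ is even, then $$\tilde{\mathfrak f}_+=\tau(\mathfrak l_r\oplus\underbrace{\mathfrak g_{\rm diag}\oplus\cdots\oplus\mathfrak g_{\rm diag}}_{m-1}),\qquad\tilde{\mathfrak f}_-=\underbrace{\mathfrak g_{\rm diag}\oplus\cdots\oplus\mathfrak g_{\rm diag}}_{m};$$ if $n=2m+1$ is odd, then $$\tilde{\mathfrak f}_+=\mathfrak f_+\oplus\underbrace{\mathfrak g_{\rm diag}\oplus\cdots\oplus\mathfrak g_{\rm diag}}_{m},\qquad\tilde{\mathfrak f}_-=\underbrace{\mathfrak g_{\rm diag}\oplus\cdots\oplus\mathfrak g_{\rm diag}}_{m}\oplus\mathfrak f_-.$$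
   Context: $\mathfrak g$ is a Lie algebra, $r=\sum_ix_i\otimes y_i\in\mathfrak g\otimes\mathfrak g$ a quasitriangular $r$-matrix ($r+r^{21}$ ad-invariant, classical Yang–Baxter equation holds), factorizable meaning $r+r^{21}$ nondegenerate. For any such tensor $s=\sum a_j\otimes b_j$ on a Lie algebra, $s_+(\xi)=\sum_j\langle\xi,a_j\rangle b_j$ and $s_-(\xi)=-\sum_j\langle\xi,b_j\rangle a_j$. $\mathfrak f_\pm=\mathrm{Im}\,r_\pm$; $r^\flat_\pm=r_\pm\circ(r_+-r_-)^{-1}$; $\mathfrak l_r=\{(r^\flat_+(x),r^\flat_-(x)):x\in\mathfrak g\}\subset\mathfrak g\oplus\mathfrak g$; $\mathfrak g_{\rm diag}=\{(x,x)\}\subset\mathfrak g\oplus\mathfrak g$. On $\mathfrak g^n=\mathfrak g\oplus\cdots\oplus\mathfrak g$, for $X\in\mathfrak g^{\otimes l}$ let $(X)_j$ be its image under the embedding of $\mathfrak g$ as the $j$-th summand, and $$r^{(n)}=\sum_{j\ \mathrm{odd}}(r)_j+\sum_{j\ \mathrm{even}}(-r^{21})_j-\sum_{1\le j<k\le n}\sum_i(y_i)_j\wedge(x_i)_k,$$ with $a\wedge b=a\otimes b-b\otimes a$. $\tau$ is the automorphism of $\mathfrak g^n$ given by $\tau(x_1,x_2,x_3,\ldots,x_{n-1},x_n)=(x_1,x_3,\ldots,x_{n-1},x_n,x_2)$, where $\mathfrak l_r\oplus\mathfrak g_{\rm diag}^{m-1}$ is viewed in $\mathfrak g^n$ in the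 obvious order. *)

theory Defs
  imports Complex_Main "HOL-Library.Function_Algebras"
begin

text \<open>Lie algebras over an arbitrary field 'k: the carrier is the whole type 'g,
  with scalar multiplication sc (a vector space) and bracket br.\<close>

definition lie_algebra :: "('k::field \<Rightarrow> 'g::ab_group_add \<Rightarrow> 'g) \<Rightarrow> ('g \<Rightarrow> 'g \<Rightarrow> 'g) \<Rightarrow> bool" where
  "lie_algebra sc br \<longleftrightarrow> Vector_Spaces.vector_space sc \<and>
     (\<forall>x y z. br (x + y) z = br x z + br y z) \<and>
     (\<forall>x y z. br x (y + z) = br x y + br x z) \<and>
     (\<forall>c x y. br (sc c x) y = sc c (br x y)) \<and>
     (\<forall>c x y. br x (sc c y) = sc c (br x y)) \<and>
     (\<forall>x. br x x = 0) \<and>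
     (\<forall>x y z. br x (br y z) + br y (br z x) + br z (br x y) = 0)"

definition dual :: "('k::field \<Rightarrow> 'g::ab_group_add \<Rightarrow> 'g) \<Rightarrow> ('g \<Rightarrow> 'k) set" where
  "dual sc = {\<xi>. Vector_Spaces.linear sc (*) \<xi>}"

definition linear_on :: "('k::field \<Rightarrow> 'v::ab_group_add \<Rightarrow> 'v) \<Rightarrow> 'v set \<Rightarrow> ('v \<Rightarrow> 'k) \<Rightarrow> bool" where
  "linear_on sc V \<xi> \<longleftrightarrow> (\<forall>v\<in>V. \<forall>w\<in>V. \<xi> (v + w) = \<xi> v + \<xi> w) \<and>
                        (\<forall>c. \<forall>v\<in>V. \<xi> (sc c v) = c * \<xi> v)"

text \<open>A tensor s = sum_j a_j \<otimes> b_j is represented by the list of pairs (a_j, b_j).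
  s_+(xi) = sum_j <xi,a_j> b_j,  s_-(xi) = - sum_j <xi,b_j> a_j.\<close>
definition tplus :: "('k \<Rightarrow> 'v::ab_group_add \<Rightarrow> 'v) \<Rightarrow> ('v \<times> 'v) list \<Rightarrow> ('v \<Rightarrow> 'k) \<Rightarrow> 'v" where
  "tplus sc s \<xi> = (\<Sum>(a, b)\<leftarrow>s. sc (\<xi> a) b)"

definition tminus :: "('k \<Rightarrow> 'v::ab_group_add \<Rightarrow> 'v) \<Rightarrow> ('v \<times> 'v) list \<Rightarrow> ('v \<Rightarrow> 'k) \<Rightarrow> 'v" where
  "tminus sc s \<xi> = - (\<Sum>(a, b)\<leftarrow>s. sc (\<xi> b) a)"

definition flip21 :: "('v \<times> 'v) list \<Rightarrow> ('v \<times> 'v) list" where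
  "flip21 s = map (\<lambda>(a, b). (b, a)) s"

text \<open>Vanishing of tensors in g\<otimes>g and g\<otimes>g\<otimes>g, tested against g^* \<otimes> g^* (resp. g^*\<otimes>g^*\<otimes>g^*),
  which separates points of the tensor product over a field.\<close>
definition ad_invariant :: "('k::field \<Rightarrow> 'g::ab_group_add \<Rightarrow> 'g) \<Rightarrow> ('g \<Rightarrow> 'g \<Rightarrow> 'g) \<Rightarrow> ('g \<times> 'g) list \<Rightarrow> bool" where
  "ad_invariant sc br t \<longleftrightarrow> (\<forall>x. \<forall>\<xi>\<in>dual sc. \<forall>\<eta>\<in>dual sc.
      (\<Sum>(a, b)\<leftarrow>t. \<xi> (br x a) * \<eta> b + \<xi> a * \<eta> (br x b)) = 0)"

text \<open>Classical Yang-Baxter equation [r12,r13]+[r12,r23]+[r13,r23] = 0.\<close>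
definition CYBE :: "('k::field \<Rightarrow> 'g::ab_group_add \<Rightarrow> 'g) \<Rightarrow> ('g \<Rightarrow> 'g \<Rightarrow> 'g) \<Rightarrow> ('g \<times> 'g) list \<Rightarrow> bool" where
  "CYBE sc br r \<longleftrightarrow> (\<forall>\<xi>\<in>dual sc. \<forall>\<eta>\<in>dual sc. \<forall>\<zeta>\<in>dual sc.
      (\<Sum>(x1, y1)\<leftarrow>r. \<Sum>(x2, y2)\<leftarrow>r.
          \<xi> (br x1 x2) * \<eta> y1 * \<zeta> y2
        + \<xi> x1 * \<eta> (br y1 x2) * \<zeta> y2
        + \<xi> x1 * \<eta> x2 * \<zeta> (br y1 y2)) = 0)"

definition quasitriangular :: "('k::field \<Rightarrow> 'g::ab_group_add \<Rightarrow> 'g) \<Rightarrow> ('g \<Rightarrow> 'g \<Rightarrow> 'g) \<Rightarrow> ('g \<times> 'g) list \<Rightarrow> bool" where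
  "quasitriangular sc br r \<longleftrightarrow> ad_invariant sc br (r @ flip21 r) \<and> CYBE sc br r"

text \<open>Factorizable: quasitriangular and r + r^{21} nondegenerate, i.e. the induced
  map (r+r^{21})_+ : g^* \<rightarrow> g is bijective.\<close>
definition factorizable :: "('k::field \<Rightarrow> 'g::ab_group_add \<Rightarrow> 'g) \<Rightarrow> ('g \<Rightarrow> 'g \<Rightarrow> 'g) \<Rightarrow> ('g \<times> 'g) list \<Rightarrow> bool" where
  "factorizable sc br r \<longleftrightarrow> quasitriangular sc br r \<and>
     bij_betw (tplus sc (r @ flip21 r)) (dual sc) UNIV"

definition fplus :: "('k::field \<Rightarrow> 'g::ab_group_add \<Rightarrow> 'g) \<Rightarrow> ('g \<times> 'g) list \<Rightarrow> 'g set" where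
  "fplus sc r = tplus sc r ` dual sc"

definition fminus :: "('k::field \<Rightarrow> 'g::ab_group_add \<Rightarrow> 'g) \<Rightarrow> ('g \<times> 'g) list \<Rightarrow> 'g set" where
  "fminus sc r = tminus sc r ` dual sc"

definition rflat_plus :: "('k::field \<Rightarrow> 'g::ab_group_add \<Rightarrow> 'g) \<Rightarrow> ('g \<times> 'g) list \<Rightarrow> 'g \<Rightarrow> 'g" where
  "rflat_plus sc r x = tplus sc r (inv_into (dual sc) (\<lambda>\<xi>. tplus sc r \<xi> - tminus sc r \<xi>) x)"

definition rflat_minus :: "('k::field \<Rightarrow> 'g::ab_group_add \<Rightarrow> 'g) \<Rightarrow> ('g \<times> 'g) list \<Rightarrow> 'g \<Rightarrow> 'g" where
  "rflat_minus sc r x = tminus sc r (inv_into (dual sc) (\<lambda>\<xi>. tplus sc r \<xi> - tminus sc r \<xi>) x)"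

definition l_r :: "('k::field \<Rightarrow> 'g::ab_group_add \<Rightarrow> 'g) \<Rightarrow> ('g \<times> 'g) list \<Rightarrow> ('g \<times> 'g) set" where
  "l_r sc r = {(rflat_plus sc r x, rflat_minus sc r x) | x. True}"

text \<open>g^n: functions nat \<Rightarrow> g supported on {1..n} (index j = j-th summand), with
  pointwise operations.\<close>
definition gn :: "nat \<Rightarrow> (nat \<Rightarrow> 'g::zero) set" where
  "gn n = {v. \<forall>k. (k < 1 \<or> n < k) \<longrightarrow> v k = 0}"

definition scaleN :: "('k \<Rightarrow> 'g \<Rightarrow> 'g) \<Rightarrow> 'k \<Rightarrow> (nat \<Rightarrow> 'g) \<Rightarrow> (nat \<Rightarrow> 'g)" where
  "scaleN sc c v = (\<lambda>k. sc c (v k))"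

definition emb :: "nat \<Rightarrow> 'g::zero \<Rightarrow> (nat \<Rightarrow> 'g)" where
  "emb j x = (\<lambda>k. if k = j then x else 0)"

text \<open>r^{(n)} = sum_{j odd} (r)_j + sum_{j even} (-r^{21})_j - sum_{j<k} sum_i (y_i)_j \<wedge> (x_i)_k\<close>
definition r_n :: "nat \<Rightarrow> ('g::ab_group_add \<times> 'g) list \<Rightarrow> ((nat \<Rightarrow> 'g) \<times> (nat \<Rightarrow> 'g)) list" where
  "r_n n r =
     concat [ (if odd j then [(emb j a, emb j b). (a, b) \<leftarrow> r]
               else [(emb j (- b), emb j a). (a, b) \<leftarrow> r]). j \<leftarrow> [1..<Suc n]]
   @ concat [ [(emb j (- y), emb k x), (emb k x, emb j y)].
               j \<leftarrow> [1..<Suc n], k \<leftarrow> [Suc j..<Suc n], (x, y) \<leftarrow> r]"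

definition fplus_n :: "('k::field \<Rightarrow> 'g::ab_group_add \<Rightarrow> 'g) \<Rightarrow> nat \<Rightarrow> ('g \<times> 'g) list \<Rightarrow> (nat \<Rightarrow> 'g) set" where
  "fplus_n sc n r = tplus (scaleN sc) (r_n n r) ` {\<xi>. linear_on (scaleN sc) (gn n) \<xi>}"

definition fminus_n :: "('k::field \<Rightarrow> 'g::ab_group_add \<Rightarrow> 'g) \<Rightarrow> nat \<Rightarrow> ('g \<times> 'g) list \<Rightarrow> (nat \<Rightarrow> 'g) set" where
  "fminus_n sc n r = tminus (scaleN sc) (r_n n r) ` {\<xi>. linear_on (scaleN sc) (gn n) \<xi>}"

definition tau :: "nat \<Rightarrow> (nat \<Rightarrow> 'g::zero) \<Rightarrow> (nat \<Rightarrow> 'g)" where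
  "tau n w = (\<lambda>k. if k = 1 then w 1
                   else if 2 \<le> k \<and> k < n then w (Suc k)
                   else if k = n then w 2 else 0)"

end

theory Submission
  imports Defs
begin



locale LS =
  fixes sc :: "'k::field \<Rightarrow> 'g::ab_group_add \<Rightarrow> 'g" and r :: "('g \<times> 'g) list"
  assumes vs: "vector_space sc"
  and bij: "bij_betw (tplus sc (r @ flip21 r)) (dual sc) UNIV"
begin

lemma md: "module sc" using vs module_iff_vector_space by blast
lemma sc0: "sc c 0 = 0"
  using md module.scale_zero_right by blast
lemma sc_minus_left: "sc (- c) x = - sc c x"
  using md module.scale_minus_left by blast
lemma sc_zero_left: "sc 0 x = 0"
  using md module.scale_zero_left by blast
lemma sc_add_left: "sc (a + b) x = sc a x + sc b x"
  using md module.scale_left_distrib by blast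

abbreviation "rp \<equiv> tplus sc r"
abbreviation "rm \<equiv> tminus sc r"
abbreviation "T \<equiv> tplus sc (r @ flip21 r)"
abbreviation "D \<equiv> dual sc"

lemma T_eq: "T f = rp f - rm f"
  unfolding tplus_def tminus_def flip21_def
  by (induct r) (auto simp: case_prod_beta)

lemma rp_add: "rp (f + g) = rp f + rp g"
  unfolding tplus_def by (induct r) (auto simp: case_prod_beta sc_add_left)
lemma rm_add: "rm (f + g) = rm f + rm g"
  unfolding tminus_def by (induct r) (auto simp: case_prod_beta sc_add_left)
lemma rp_zero: "rp 0 = 0"
  unfolding tplus_def by (induct r) (auto simp: case_prod_beta sc_zero_left)
lemma rm_zero: "rm 0 = 0"
  unfolding tminus_def by (induct r) (auto simp: case_prod_beta sc_zero_left)
lemma rp_uminus: "rp (- f) = - rp f"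
  unfolding tplus_def by (induct r) (auto simp: case_prod_beta sc_minus_left)
lemma rm_uminus: "rm (- f) = - rm f"
  unfolding tminus_def by (induct r) (auto simp: case_prod_beta sc_minus_left)
lemma T_add: "T (f + g) = T f + T g" by (simp add: T_eq rp_add rm_add)
lemma T_zero: "T 0 = 0" by (simp add: T_eq rp_zero rm_zero)
lemma T_uminus: "T (- f) = - T f" by (simp add: T_eq rp_uminus rm_uminus)
lemma T_diff: "T (f - g) = T f - T g" by (metis T_add T_uminus diff_conv_add_uminus)

lemma rp_sum: "rp (sum F A) = (\<Sum>a\<in>A. rp (F a))"
  proof (induct A rule: infinite_finite_induct)
  case (infinite A)
  then have "sum F A = 0" "(\<Sum>a\<in>A. rp (F a)) = 0" by simp_all
  then show ?case by (simp only: rp_zero)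
next
  case empty
  then show ?case by (simp only: sum.empty rp_zero)
next
  case (insert x A)
  then have "sum F (insert x A) = F x + sum F A" "(\<Sum>a\<in>insert x A. rp (F a)) = rp (F x) + (\<Sum>a\<in>A. rp (F a))" by simp_all
  then show ?case using insert by (simp only: rp_add)
qed
lemma rm_sum: "rm (sum F A) = (\<Sum>a\<in>A. rm (F a))"
  proof (induct A rule: infinite_finite_induct)
  case (infinite A)
  then have "sum F A = 0" "(\<Sum>a\<in>A. rm (F a)) = 0" by simp_all
  then show ?case by (simp only: rm_zero)
next
  case empty
  then show ?case by (simp only: sum.empty rm_zero)
next
  case (insert x A)
  then have "sum F (insert x A) = F x + sum F A" "(\<Sum>a\<in>insert x A. rm (F a)) = rm (F x) + (\<Sum>a\<in>A. rm (F a))" by simp_all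
  then show ?case using insert by (simp only: rm_add)
qed
lemma T_sum: "T (sum F A) = (\<Sum>a\<in>A. T (F a))"
  proof (induct A rule: infinite_finite_induct)
  case (infinite A)
  then have "sum F A = 0" "(\<Sum>a\<in>A. T (F a)) = 0" by simp_all
  then show ?case by (simp only: T_zero)
next
  case empty
  then show ?case by (simp only: sum.empty T_zero)
next
  case (insert x A)
  then have "sum F (insert x A) = F x + sum F A" "(\<Sum>a\<in>insert x A. T (F a)) = T (F x) + (\<Sum>a\<in>A. T (F a))" by simp_all
  then show ?case using insert by (simp only: T_add)
qed

lemma vsk: "vector_space ((*) :: 'k \<Rightarrow> 'k \<Rightarrow> 'k)"
  by (unfold_locales) (auto simp: algebra_simps)

lemma D_iff: "f \<in> D \<longleftrightarrow> (\<forall>x y. f (x + y) = f x + f y) \<and> (\<forall>c x. f (sc c x) = c * f x)"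
  unfolding dual_def using vs vsk by (simp add: Vector_Spaces.linear_iff)

lemma D_zero: "0 \<in> D" by (simp add: D_iff)
lemma D_add: "f \<in> D \<Longrightarrow> g \<in> D \<Longrightarrow> f + g \<in> D" by (simp add: D_iff algebra_simps)
lemma D_uminus: "f \<in> D \<Longrightarrow> - f \<in> D" by (simp add: D_iff algebra_simps)
lemma D_diff: "f \<in> D \<Longrightarrow> g \<in> D \<Longrightarrow> f - g \<in> D" by (simp add: D_iff algebra_simps)
lemma D_sum: "(\<And>a. a \<in> A \<Longrightarrow> F a \<in> D) \<Longrightarrow> sum F A \<in> D"
  by (induct A rule: infinite_finite_induct) (auto simp: D_zero D_add)
lemma D_0: "f \<in> D \<Longrightarrow> f 0 = 0"
  by (metis D_iff add_cancel_right_right)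

definition "Tinv x = inv_into D T x"
lemma Tinv: "Tinv x \<in> D" "T (Tinv x) = x"
  using bij unfolding Tinv_def bij_betw_def
  by (auto intro: inv_into_into f_inv_into_f)
     (metis UNIV_I f_inv_into_f)
lemma T_inj: "f \<in> D \<Longrightarrow> g \<in> D \<Longrightarrow> T f = T g \<Longrightarrow> f = g"
  using bij unfolding bij_betw_def inj_on_def by blast
lemma Tinv_T: "f \<in> D \<Longrightarrow> Tinv (T f) = f"
  using T_inj Tinv by blast

end



definition X :: "((nat \<Rightarrow> 'g::zero) \<Rightarrow> 'k) \<Rightarrow> nat \<Rightarrow> 'g \<Rightarrow> 'k" where "X \<xi> j y = \<xi> (emb j y)"
definition aP :: "('k \<Rightarrow> 'g::ab_group_add \<Rightarrow> 'g) \<Rightarrow> ('g \<times> 'g) list \<Rightarrow> ((nat \<Rightarrow> 'g) \<Rightarrow> 'k) \<Rightarrow> nat \<Rightarrow> 'g"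
  where "aP sc r \<xi> j = (\<Sum>(x,y)\<leftarrow>r. sc (\<xi> (emb j (-y))) x)"

context LS begin

lemma tplus_comp: "tplus (scaleN sc) L \<xi> k = (\<Sum>(A,B)\<leftarrow>L. sc (\<xi> A) (B k))"
  unfolding tplus_def scaleN_def by (induct L) (auto simp: split_def)
lemma tminus_comp: "tminus (scaleN sc) L \<xi> k = - (\<Sum>(A,B)\<leftarrow>L. sc (\<xi> B) (A k))"
  unfolding tminus_def scaleN_def by (induct L) (auto simp: split_def)

lemma sum_list_concat_map: "sum_list (map f (concat xss)) = sum_list (map (\<lambda>xs. sum_list (map f xs)) xss)"
  by (induct xss) auto

lemma sum_list_zero': "(\<And>x. x \<in> set xs \<Longrightarrow> f x = 0) \<Longrightarrow> sum_list (map f xs) = 0"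
  by (induct xs) auto

lemma sc_minus_right: "sc c (- x) = - sc c x"
  using md module.scale_minus_right by blast

lemma in1p: "(\<Sum>(A, B)\<leftarrow>(if odd j then map (\<lambda>(a, b). (emb j a, emb j b)) rr
                  else map (\<lambda>(a, b). (emb j (- b), emb j a)) rr). sc (\<xi> A) (B k))
   = (if k = j then (if odd j then tplus sc rr (X \<xi> j) else aP sc rr \<xi> j) else 0)"
  unfolding tplus_def X_def aP_def
  by (induct rr) (auto simp: emb_def split_def sc0 algebra_simps)

lemma in2p: "(\<Sum>xb\<leftarrow>rr. \<Sum>(A, B)\<leftarrow>(case xb of (xb, y) \<Rightarrow>
          [(emb j (- y), emb k' xb), (emb k' xb, emb j y)]). sc (\<xi> A) (B k))
   = (if k = k' then aP sc rr \<xi> j else 0) + (if k = j then tplus sc rr (X \<xi> k') else 0)"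
  unfolding aP_def tplus_def X_def
  by (induct rr) (auto simp: emb_def sc0 split_def algebra_simps)

lemma in1m: "(\<Sum>(A, B)\<leftarrow>(if odd j then map (\<lambda>(a, b). (emb j a, emb j b)) rr
                  else map (\<lambda>(a, b). (emb j (- b), emb j a)) rr). sc (\<xi> B) (A k))
   = - (if k = j then (if odd j then tminus sc rr (X \<xi> j) else tplus sc rr (X \<xi> j)) else 0)"
  unfolding tplus_def tminus_def X_def
  by (induct rr) (auto simp: emb_def split_def sc0 sc_minus_right algebra_simps)

lemma in2m: "(\<Sum>xb\<leftarrow>rr. \<Sum>(A, B)\<leftarrow>(case xb of (xb, y) \<Rightarrow>
          [(emb j (- y), emb k' xb), (emb k' xb, emb j y)]). sc (\<xi> B) (A k))
   = - ((if k = k' then tminus sc rr (X \<xi> j) else 0) + (if k = j then tplus sc rr (X \<xi> k') else 0))"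
  unfolding tminus_def tplus_def X_def
  by (induct rr) (auto simp: emb_def sc0 sc_minus_right split_def algebra_simps)


lemma dsum1: "(\<Sum>x\<in>{1..<Suc n}. \<Sum>xa\<in>{Suc x..<Suc n}. (if k = xa then f x else 0)) = (\<Sum>j\<in>{1..<k}. f j)"
  if "1 \<le> k" "k \<le> n" for f :: "nat \<Rightarrow> 'a::comm_monoid_add"
proof -
  have "(\<Sum>x\<in>{1..<Suc n}. \<Sum>xa\<in>{Suc x..<Suc n}. (if k = xa then f x else 0))
     = (\<Sum>x\<in>{1..<Suc n}. if x < k then f x else 0)"
    by (rule sum.cong) (use that in auto)
  also have "\<dots> = (\<Sum>x\<in>{1..<Suc n} \<inter> {x. x < k}. f x)"
    by (simp add: sum.inter_restrict)
  also have "{1..<Suc n} \<inter> {x. x < k} = {1..<k}" using that by auto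
  finally show ?thesis by simp
qed

lemma dsum2: "(\<Sum>x\<in>{1..<Suc n}. \<Sum>xa\<in>{Suc x..<Suc n}. (if k = x then f xa else 0)) = (\<Sum>j\<in>{k<..n}. f j)"
  if "1 \<le> k" "k \<le> n" for f :: "nat \<Rightarrow> 'a::comm_monoid_add"
proof -
  have "(\<Sum>x\<in>{1..<Suc n}. \<Sum>xa\<in>{Suc x..<Suc n}. (if k = x then f xa else 0))
     = (\<Sum>x\<in>{1..<Suc n}. if k = x then (\<Sum>xa\<in>{Suc x..<Suc n}. f xa) else 0)"
    by (rule sum.cong) auto
  also have "\<dots> = (\<Sum>xa\<in>{Suc k..<Suc n}. f xa)" using that by (simp add: sum.delta)
  also have "{Suc k..<Suc n} = {k<..n}" by auto
  finally show ?thesis .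
qed

lemma dsum0: "(\<Sum>x\<in>{1..<Suc n}. if k = x then f x else 0) = f k"
  if "1 \<le> k" "k \<le> n" for f :: "nat \<Rightarrow> 'a::comm_monoid_add"
  using that by (simp add: sum.delta)

lemma plus_raw: assumes "1 \<le> k" "k \<le> n" shows
 "tplus (scaleN sc) (r_n n r) \<xi> k = (\<Sum>j\<in>{1..<k}. aP sc r \<xi> j) + (if odd k then rp (X \<xi> k) else aP sc r \<xi> k) + (\<Sum>j\<in>{k<..n}. rp (X \<xi> j))"
  unfolding tplus_comp r_n_def
  apply (simp only: sum_list_concat_map map_append sum_list_append map_map o_def interv_sum_list_conv_sum_set_nat set_upt)
  apply (simp only: in1p in2p sum.distrib)
  apply (simp only: dsum0[OF assms] dsum1[OF assms] dsum2[OF assms])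
  apply (simp add: algebra_simps)
  done

lemma minus_raw: assumes "1 \<le> k" "k \<le> n" shows
 "tminus (scaleN sc) (r_n n r) \<xi> k = (\<Sum>j\<in>{1..<k}. rm (X \<xi> j)) + (if odd k then rm (X \<xi> k) else rp (X \<xi> k)) + (\<Sum>j\<in>{k<..n}. rp (X \<xi> j))"
  unfolding tminus_comp r_n_def
  apply (simp only: sum_list_concat_map map_append sum_list_append map_map o_def interv_sum_list_conv_sum_set_nat set_upt)
  apply (simp only: in1m in2m sum.distrib sum_negf)
  apply (simp only: dsum0[OF assms] dsum1[OF assms] dsum2[OF assms])
  apply (simp add: algebra_simps)
  done

lemma plus_out: assumes "k < 1 \<or> n < k" shows "tplus (scaleN sc) (r_n n r) \<xi> k = 0"
  unfolding tplus_comp r_n_def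
  apply (simp only: sum_list_concat_map map_append sum_list_append map_map o_def interv_sum_list_conv_sum_set_nat set_upt)
  apply (simp only: in1p in2p sum.distrib)
  using assms apply (auto intro!: sum.neutral)
  done

lemma minus_out: assumes "k < 1 \<or> n < k" shows "tminus (scaleN sc) (r_n n r) \<xi> k = 0"
  unfolding tminus_comp r_n_def
  apply (simp only: sum_list_concat_map map_append sum_list_append map_map o_def interv_sum_list_conv_sum_set_nat set_upt)
  apply (simp only: in1m in2m sum.distrib sum_negf)
  using assms apply (auto intro!: sum.neutral)
  done

end



context LS begin

definition PF :: "nat \<Rightarrow> (nat \<Rightarrow> 'g \<Rightarrow> 'k) \<Rightarrow> nat \<Rightarrow> 'g" where
  "PF n \<eta> = (\<lambda>k. if 1 \<le> k \<and> k \<le> n then rm (\<Sum>j\<in>{1..n}. \<eta> j) + (\<Sum>j\<in>{k<..n}. T (\<eta> j))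
      + (if odd k then T (\<eta> k) else 0) else 0)"
definition MF :: "nat \<Rightarrow> (nat \<Rightarrow> 'g \<Rightarrow> 'k) \<Rightarrow> nat \<Rightarrow> 'g" where
  "MF n \<eta> = (\<lambda>k. if 1 \<le> k \<and> k \<le> n then rm (\<Sum>j\<in>{1..n}. \<eta> j) + (\<Sum>j\<in>{k<..n}. T (\<eta> j))
      + (if even k then T (\<eta> k) else 0) else 0)"

lemma PF_cong: "(\<And>j. j \<in> {1..n} \<Longrightarrow> \<eta> j = \<eta>' j) \<Longrightarrow> PF n \<eta> = PF n \<eta>'"
  unfolding PF_def by (intro ext) (auto intro!: sum.cong arg_cong[where f=rm])
lemma MF_cong: "(\<And>j. j \<in> {1..n} \<Longrightarrow> \<eta> j = \<eta>' j) \<Longrightarrow> MF n \<eta> = MF n \<eta>'"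
  unfolding MF_def by (intro ext) (auto intro!: sum.cong arg_cong[where f=rm])

lemma split3: "1 \<le> (k::nat) \<Longrightarrow> k \<le> n \<Longrightarrow> sum f {1..n} = sum f {1..<k} + f k + sum f {k<..n}"
  for f :: "nat \<Rightarrow> 'a::comm_monoid_add"
proof -
  assume a: "1 \<le> k" "k \<le> n"
  have e: "{1..n} = {1..<k} \<union> ({k} \<union> {k<..n})" using a by auto
  have 1: "sum f ({1..<k} \<union> ({k} \<union> {k<..n})) = sum f {1..<k} + sum f ({k} \<union> {k<..n})"
    by (rule sum.union_disjoint) auto
  have 2: "sum f ({k} \<union> {k<..n}) = f k + sum f {k<..n}"
    by (subst sum.union_disjoint) auto
  show ?thesis unfolding e 1 2 by (simp add: add.assoc)
qed

lemma rp_eq: "rp f = rm f + T f" by (simp add: T_eq)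

lemma alg_plus: "1 \<le> (k::nat) \<Longrightarrow> k \<le> n \<Longrightarrow>
  (\<Sum>j\<in>{1..<k}. rm (\<eta> j)) + (if odd k then rp (\<eta> k) else rm (\<eta> k)) + (\<Sum>j\<in>{k<..n}. rp (\<eta> j))
  = rm (\<Sum>j\<in>{1..n}. \<eta> j) + (\<Sum>j\<in>{k<..n}. T (\<eta> j)) + (if odd k then T (\<eta> k) else 0)"
  using split3[of k n "\<lambda>j. rm (\<eta> j)"] by (simp add: rm_sum rp_eq sum.distrib algebra_simps)

lemma alg_minus: "1 \<le> (k::nat) \<Longrightarrow> k \<le> n \<Longrightarrow>
  (\<Sum>j\<in>{1..<k}. rm (\<eta> j)) + (if odd k then rm (\<eta> k) else rp (\<eta> k)) + (\<Sum>j\<in>{k<..n}. rp (\<eta> j))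
  = rm (\<Sum>j\<in>{1..n}. \<eta> j) + (\<Sum>j\<in>{k<..n}. T (\<eta> j)) + (if even k then T (\<eta> k) else 0)"
  using split3[of k n "\<lambda>j. rm (\<eta> j)"] by (simp add: rm_sum rp_eq sum.distrib algebra_simps)

lemma emb_gn: "j \<in> {1..n} \<Longrightarrow> emb j y \<in> gn n"
  by (auto simp: emb_def gn_def)

lemma lin_zero: assumes "linear_on (scaleN sc) (gn n) \<xi>" shows "\<xi> 0 = 0"
proof -
  have "(0::nat\<Rightarrow>'g) \<in> gn n" by (simp add: gn_def)
  then have "\<xi> (0 + 0) = \<xi> 0 + \<xi> 0" using assms unfolding linear_on_def by blast
  then show ?thesis by (metis add.right_neutral add_left_cancel)
qed

lemma X_D: assumes "linear_on (scaleN sc) (gn n) \<xi>" "j \<in> {1..n}" shows "X \<xi> j \<in> D"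
  unfolding D_iff
proof (intro conjI allI)
  fix x y :: 'g
  have "emb j (x + y) = emb j x + emb j y" by (rule ext) (simp add: emb_def)
  then show "X \<xi> j (x + y) = X \<xi> j x + X \<xi> j y"
    using assms emb_gn[OF assms(2)] unfolding X_def linear_on_def by metis
next
  fix c and x :: 'g
  have "emb j (sc c x) = scaleN sc c (emb j x)" by (auto simp: emb_def scaleN_def sc0)
  then show "X \<xi> j (sc c x) = c * X \<xi> j x"
    using assms emb_gn[OF assms(2)] unfolding X_def linear_on_def by metis
qed

lemma sum_list_minus: "sum_list (map (\<lambda>x. - f x) xs) = - sum_list (map f xs)"
  for f :: "_ \<Rightarrow> 'a::ab_group_add"
  by (induct xs) auto

lemma aP_rm: assumes "linear_on (scaleN sc) (gn n) \<xi>" "j \<in> {1..n}" shows "aP sc r \<xi> j = rm (X \<xi> j)"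
proof -
  have "\<xi> (emb j (- y)) = - X \<xi> j y" for y
  proof -
    have h: "X \<xi> j (y + - y) = X \<xi> j y + X \<xi> j (- y)" using X_D[OF assms] unfolding D_iff by blast
    have "X \<xi> j 0 = 0" using D_0[OF X_D[OF assms]] .
    then have "X \<xi> j (- y) + X \<xi> j y = 0" using h by (simp add: add.commute)
    then show ?thesis unfolding X_def by (simp add: eq_neg_iff_add_eq_0)
  qed
  then show ?thesis unfolding aP_def tminus_def by (simp add: split_def sc_minus_left sum_list_minus)
qed


lemma plus_PF: assumes "linear_on (scaleN sc) (gn n) \<xi>" shows "tplus (scaleN sc) (r_n n r) \<xi> = PF n (X \<xi>)"
proof
  fix k
  show "tplus (scaleN sc) (r_n n r) \<xi> k = PF n (X \<xi>) k"
  proof (cases "1 \<le> k \<and> k \<le> n")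
    case True
    have "(\<Sum>j\<in>{1..<k}. aP sc r \<xi> j) = (\<Sum>j\<in>{1..<k}. rm (X \<xi> j))"
      by (rule sum.cong) (use True in \<open>auto intro!: aP_rm[OF assms]\<close>)
    moreover have "aP sc r \<xi> k = rm (X \<xi> k)" using True by (auto intro!: aP_rm[OF assms])
    ultimately show ?thesis using True
      by (simp only: plus_raw PF_def alg_plus) simp
  next
    case False
    then have "k < 1 \<or> n < k" by auto
    from plus_out[OF this] False show ?thesis by (auto simp: PF_def)
  qed
qed

lemma minus_MF: shows "tminus (scaleN sc) (r_n n r) \<xi> = MF n (X \<xi>)"
proof
  fix k
  show "tminus (scaleN sc) (r_n n r) \<xi> k = MF n (X \<xi>) k"
  proof (cases "1 \<le> k \<and> k \<le> n")
    case True
    then show ?thesis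
      by (simp only: minus_raw MF_def alg_minus) simp
  next
    case False
    then have "k < 1 \<or> n < k" by auto
    from minus_out[OF this] False show ?thesis by (auto simp: MF_def)
  qed
qed

definition "Dn n = {\<eta>. \<forall>j\<in>{1..n}. \<eta> j \<in> D}"

definition lift :: "nat \<Rightarrow> (nat \<Rightarrow> 'g \<Rightarrow> 'k) \<Rightarrow> (nat \<Rightarrow> 'g) \<Rightarrow> 'k" where
  "lift n \<eta> v = (\<Sum>j\<in>{1..n}. \<eta> j (v j))"

lemma lift_lin: assumes "\<eta> \<in> Dn n" shows "linear_on (scaleN sc) (gn n) (lift n \<eta>)"
  unfolding linear_on_def lift_def
proof (intro conjI ballI allI)
  fix v w :: "nat \<Rightarrow> 'g"
  show "(\<Sum>j\<in>{1..n}. \<eta> j ((v + w) j)) = (\<Sum>j\<in>{1..n}. \<eta> j (v j)) + (\<Sum>j\<in>{1..n}. \<eta> j (w j))"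
    using assms unfolding Dn_def by (simp add: D_iff sum.distrib)
next
  fix c and v :: "nat \<Rightarrow> 'g"
  show "(\<Sum>j\<in>{1..n}. \<eta> j (scaleN sc c v j)) = c * (\<Sum>j\<in>{1..n}. \<eta> j (v j))"
    using assms unfolding Dn_def by (simp add: D_iff scaleN_def sum_distrib_left)
qed

lemma X_lift: assumes "\<eta> \<in> Dn n" "j \<in> {1..n}" shows "X (lift n \<eta>) j = \<eta> j"
proof
  fix y
  have "X (lift n \<eta>) j y = (\<Sum>i\<in>{1..n}. if i = j then \<eta> j y else 0)"
    unfolding X_def lift_def emb_def
    by (rule sum.cong) (use assms in \<open>auto simp: Dn_def D_0\<close>)
  also have "\<dots> = \<eta> j y" using assms(2) by (simp add: sum.delta')
  finally show "X (lift n \<eta>) j y = \<eta> j y" .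
qed

lemma fplus_PF: "fplus_n sc n r = PF n ` Dn n"
proof
  show "fplus_n sc n r \<subseteq> PF n ` Dn n"
    unfolding fplus_n_def using plus_PF X_D by (auto simp: Dn_def)
  show "PF n ` Dn n \<subseteq> fplus_n sc n r"
  proof
    fix v assume "v \<in> PF n ` Dn n"
    then obtain \<eta> where e: "\<eta> \<in> Dn n" "v = PF n \<eta>" by blast
    have "PF n \<eta> = PF n (X (lift n \<eta>))" by (rule PF_cong) (simp add: X_lift[OF e(1)])
    also have "\<dots> = tplus (scaleN sc) (r_n n r) (lift n \<eta>)" using plus_PF[OF lift_lin[OF e(1)]] by simp
    finally show "v \<in> fplus_n sc n r" unfolding fplus_n_def using e lift_lin[OF e(1)] by blast
  qed
qed

lemma fminus_MF: "fminus_n sc n r = MF n ` Dn n"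
proof
  show "fminus_n sc n r \<subseteq> MF n ` Dn n"
    unfolding fminus_n_def using minus_MF X_D by (auto simp: Dn_def)
  show "MF n ` Dn n \<subseteq> fminus_n sc n r"
  proof
    fix v assume "v \<in> MF n ` Dn n"
    then obtain \<eta> where e: "\<eta> \<in> Dn n" "v = MF n \<eta>" by blast
    have "MF n \<eta> = MF n (X (lift n \<eta>))" by (rule MF_cong) (simp add: X_lift[OF e(1)])
    also have "\<dots> = tminus (scaleN sc) (r_n n r) (lift n \<eta>)" using minus_MF by simp
    finally show "v \<in> fminus_n sc n r" unfolding fminus_n_def using e lift_lin[OF e(1)] by blast
  qed
qed

end



lemma reidx:
  fixes g :: "nat \<Rightarrow> 'a::comm_monoid_add"
  assumes "finite A" "f ` B \<subseteq> A" "inj_on f B" "\<And>j. j \<in> A \<Longrightarrow> j \<notin> f ` B \<Longrightarrow> g j = 0"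
  shows "sum g A = (\<Sum>l\<in>B. g (f l))"
proof -
  have "sum g A = sum g (f ` B)"
    by (rule sum.mono_neutral_right) (use assms in auto)
  also have "\<dots> = (\<Sum>l\<in>B. g (f l))" using assms(3) by (simp add: sum.reindex)
  finally show ?thesis .
qed

lemma tele: "i \<le> M \<Longrightarrow> (\<Sum>l\<in>{i..<M}. u l - u (Suc l)) = u i - (u M :: 'a::ab_group_add)"
proof -
  assume "i \<le> M"
  from sum_Suc_diff'[OF this, of u]
  have "(\<Sum>l\<in>{i..<M}. u (Suc l) - u l) = u M - u i" .
  then have "- (\<Sum>l\<in>{i..<M}. u (Suc l) - u l) = u i - u M" by simp
  then show ?thesis by (simp add: sum_negf[symmetric])
qed

context LS begin

lemma plus_constr:
  assumes z: "\<zeta> \<in> D" and u0: "u 0 = rp \<zeta>" and uM: "u M = rm \<zeta>" and N1: "2*M \<le> N+1" and N2: "N \<le> 2*M"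
  shows "\<exists>\<eta>\<in>Dn N. \<forall>k\<in>{1..N}. PF N \<eta> k = u (k div 2)"
proof -
  define \<eta> where "\<eta> j = (if odd j \<and> j < 2*M then Tinv (u ((j-1) div 2) - u (Suc ((j-1) div 2))) else 0)" for j
  have T\<eta>: "T (\<eta> j) = (if odd j \<and> j < 2*M then u ((j-1) div 2) - u (Suc ((j-1) div 2)) else 0)" for j
    by (simp add: \<eta>_def Tinv T_zero)
  have \<eta>D: "\<eta> j \<in> D" for j by (simp add: \<eta>_def Tinv D_zero)
  have T\<eta>0: "T (\<eta> j) = 0" if "\<not> (odd j \<and> j < 2*M)" for j
    using that unfolding \<eta>_def by (simp only: if_False T_zero)
  have tel: "(\<Sum>j\<in>{2*i<..N}. T (\<eta> j)) = u i - u M" if "i \<le> M" for i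
  proof -
    have "(\<Sum>j\<in>{2*i<..N}. T (\<eta> j)) = (\<Sum>l\<in>{i..<M}. T (\<eta> (2*l+1)))"
    proof (rule reidx)
      show "(\<lambda>l. 2*l+1) ` {i..<M} \<subseteq> {2*i<..N}" using N1 by auto
      show "inj_on (\<lambda>l. 2*l+1) {i..<M}" by (auto simp: inj_on_def)
      fix j assume j: "j \<in> {2*i<..N}" "j \<notin> (\<lambda>l. 2*l+1) ` {i..<M}"
      show "T (\<eta> j) = 0"
      proof (cases "odd j \<and> j < 2*M")
        case True
        then have "j = 2*((j-1) div 2)+1" by presburger
        moreover have "(j-1) div 2 \<in> {i..<M}" using True j(1) by auto
        ultimately have False using j(2) by blast
        then show ?thesis ..
      next
        case False
        then show ?thesis by (rule T\<eta>0)
      qed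
    qed simp
    also have "\<dots> = (\<Sum>l\<in>{i..<M}. u l - u (Suc l))"
      by (rule sum.cong) (auto simp: T\<eta>)
    also have "\<dots> = u i - u M" using tele[OF that] .
    finally show ?thesis .
  qed
  have "T (\<Sum>j\<in>{1..N}. \<eta> j) = T \<zeta>"
  proof -
    have "{1..N} = {2*0<..N}" by auto
    then have "T (\<Sum>j\<in>{1..N}. \<eta> j) = u 0 - u M" using tel[of 0] by (simp add: T_sum)
    then show ?thesis by (simp add: u0 uM T_eq)
  qed
  moreover have SD: "(\<Sum>j\<in>{1..N}. \<eta> j) \<in> D" by (rule D_sum) (rule \<eta>D)
  ultimately have S0: "(\<Sum>j\<in>{1..N}. \<eta> j) = \<zeta>" using T_inj[OF SD z] by blast
  have S: "sum \<eta> {Suc 0..N} = \<zeta>" using S0 by simp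
  have "PF N \<eta> k = u (k div 2)" if k: "k \<in> {1..N}" for k
  proof (cases "even k")
    case True
    then obtain i where i: "k = 2*i" by blast
    have "i \<le> M" using k i N2 by auto
    then show ?thesis using k True i tel[of i] by (simp add: PF_def S uM)
  next
    case False
    then obtain i where i: "k = 2*i+1" using oddE by blast
    have iM: "i \<le> M" using k i N2 by auto
    have "{2*i<..N} = insert k {k<..N}" using k i by auto
    then have "(\<Sum>j\<in>{k<..N}. T (\<eta> j)) + T (\<eta> k) = u i - u M"
      using tel[OF iM] by (simp add: add.commute)
    then show ?thesis using k False i by (simp add: PF_def S uM add.assoc)
  qed
  moreover have "\<eta> \<in> Dn N" by (simp add: Dn_def \<eta>D)
  ultimately show ?thesis by blast
qed


lemma minus_constr:
  assumes z: "\<zeta> \<in> D" and um: "u (Suc m) = rm \<zeta>" and N1: "2*m \<le> N" and N2: "N \<le> 2*m+1" and N0: "1 \<le> N"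
  shows "\<exists>\<eta>\<in>Dn N. \<forall>k\<in>{1..N}. MF N \<eta> k = u ((k+1) div 2)"
proof -
  define \<eta>2 where "\<eta>2 l = Tinv (u l - u (Suc l))" for l
  define \<eta> where "\<eta> j = (if j = 1 then \<zeta> - (\<Sum>l\<in>{1..m}. \<eta>2 l)
      else if even j \<and> 2 \<le> j \<and> j \<le> 2*m then \<eta>2 (j div 2) else 0)" for j
  have \<eta>2D: "\<eta>2 l \<in> D" for l by (simp add: \<eta>2_def Tinv)
  have \<eta>D: "\<eta> j \<in> D" for j by (simp add: \<eta>_def \<eta>2D D_zero D_diff D_sum z)
  have odd0: "\<eta> j = 0" if "j \<noteq> 1" "\<not> (even j \<and> 2 \<le> j \<and> j \<le> 2*m)" for j
    unfolding \<eta>_def using that by (simp only: if_False)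
  have ev: "\<eta> (2*l) = \<eta>2 l" if "l \<in> {1..m}" for l using that by (simp add: \<eta>_def)
  have "(\<Sum>j\<in>{1<..N}. \<eta> j) = (\<Sum>l\<in>{1..m}. \<eta> (2*l))"
  proof (rule reidx)
    show "(\<lambda>l. 2*l) ` {1..m} \<subseteq> {1<..N}" using N1 by auto
    show "inj_on (\<lambda>l. 2*l) {1..m}" by (auto simp: inj_on_def)
    fix j assume j: "j \<in> {1<..N}" "j \<notin> (\<lambda>l. 2*l) ` {1..m}"
    show "\<eta> j = 0"
    proof (rule odd0)
      show "j \<noteq> 1" using j by auto
      show "\<not> (even j \<and> 2 \<le> j \<and> j \<le> 2*m)"
      proof
        assume h: "even j \<and> 2 \<le> j \<and> j \<le> 2*m"
        then have "j = 2*(j div 2)" by simp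
        moreover have "j div 2 \<in> {1..m}" using h by auto
        ultimately show False using j(2) by blast
      qed
    qed
  qed simp
  also have "\<dots> = (\<Sum>l\<in>{1..m}. \<eta>2 l)" by (rule sum.cong) (auto simp: ev)
  finally have s1: "(\<Sum>j\<in>{1<..N}. \<eta> j) = (\<Sum>l\<in>{1..m}. \<eta>2 l)" .
  have "{1..N} = insert 1 {1<..N}" using N0 by auto
  then have S0: "(\<Sum>j\<in>{1..N}. \<eta> j) = \<zeta>" using s1 by (simp add: \<eta>_def)
  have S: "sum \<eta> {Suc 0..N} = \<zeta>" using S0 by simp
  have tel: "(\<Sum>j\<in>{2*i-1<..N}. T (\<eta> j)) = u i - rm \<zeta>" if "1 \<le> i" "i \<le> Suc m" for i
  proof -
    have "(\<Sum>j\<in>{2*i-1<..N}. T (\<eta> j)) = (\<Sum>l\<in>{i..m}. T (\<eta> (2*l)))"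
    proof (rule reidx)
      show "(\<lambda>l. 2*l) ` {i..m} \<subseteq> {2*i-1<..N}" using N1 that by auto
      show "inj_on (\<lambda>l. 2*l) {i..m}" by (auto simp: inj_on_def)
      fix j assume j: "j \<in> {2*i-1<..N}" "j \<notin> (\<lambda>l. 2*l) ` {i..m}"
      have "\<eta> j = 0"
      proof (rule odd0)
        show "j \<noteq> 1" using j that by auto
        show "\<not> (even j \<and> 2 \<le> j \<and> j \<le> 2*m)"
        proof
          assume h: "even j \<and> 2 \<le> j \<and> j \<le> 2*m"
          then have "j = 2*(j div 2)" by simp
          moreover have "j div 2 \<in> {i..m}" using h j(1) by auto
          ultimately show False using j(2) by blast
        qed
      qed
      then show "T (\<eta> j) = 0" by (simp add: T_zero)
    qed simp
    also have "\<dots> = (\<Sum>l\<in>{i..<Suc m}. u l - u (Suc l))"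
    proof (rule sum.cong)
      show "{i..m} = {i..<Suc m}" by auto
      fix l assume "l \<in> {i..<Suc m}"
      then show "T (\<eta> (2*l)) = u l - u (Suc l)" using that by (simp add: ev \<eta>2_def Tinv)
    qed
    also have "\<dots> = u i - rm \<zeta>" using tele[OF that(2), of u] um by simp
    finally show ?thesis .
  qed
  have "MF N \<eta> k = u ((k+1) div 2)" if k: "k \<in> {1..N}" for k
  proof (cases "even k")
    case True
    then obtain i where i: "k = 2*i" by blast
    have i1: "1 \<le> i" "i \<le> Suc m" using k i N2 by auto
    have "{2*i-1<..N} = insert k {k<..N}" using k i by auto
    then have "(\<Sum>j\<in>{k<..N}. T (\<eta> j)) + T (\<eta> k) = u i - rm \<zeta>"
      using tel[OF i1] by (simp add: add.commute)
    moreover have "(k+1) div 2 = i" using i by simp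
    ultimately show ?thesis using k True by (simp add: MF_def S add.assoc)
  next
    case False
    then obtain i where i: "k = 2*i+1" using oddE by blast
    have i1: "1 \<le> Suc i" "Suc i \<le> Suc m" using k i N2 by auto
    have "2 * Suc i - 1 = k" using i by simp
    then have "(\<Sum>j\<in>{k<..N}. T (\<eta> j)) = u (Suc i) - rm \<zeta>" using tel[OF i1] by simp
    moreover have "(k+1) div 2 = Suc i" using i by simp
    ultimately show ?thesis using k False by (simp add: MF_def S)
  qed
  moreover have "\<eta> \<in> Dn N" by (simp add: Dn_def \<eta>D)
  ultimately show ?thesis by blast
qed

end



context LS begin

lemma SD: "\<eta> \<in> Dn n \<Longrightarrow> sum \<eta> {1..n} \<in> D"
  by (rule D_sum) (auto simp: Dn_def)

lemma PF_gn: "PF n \<eta> \<in> gn n" by (auto simp: PF_def gn_def)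
lemma MF_gn: "MF n \<eta> \<in> gn n" by (auto simp: MF_def gn_def)

lemma PF_1: assumes "1 \<le> n" shows "PF n \<eta> 1 = rp (sum \<eta> {1..n})"
proof -
  have e: "{1..n} = insert 1 {1<..n}" using assms by auto
  have "T (sum \<eta> {1..n}) = T (\<eta> 1) + (\<Sum>j\<in>{1<..n}. T (\<eta> j))"
    unfolding T_sum e by simp
  then show ?thesis using assms unfolding PF_def by (simp add: rp_eq add.assoc add.commute)
qed

lemma PF_pair: assumes "1 \<le> i" "2*i+1 \<le> n" shows "PF n \<eta> (2*i) = PF n \<eta> (2*i+1)"
proof -
  have e: "{2*i<..n} = insert (2*i+1) {2*i+1<..n}" using assms by auto
  show ?thesis using assms unfolding PF_def e by (simp add: add.commute add.left_commute)
qed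

lemma PF_last: assumes "even n" "1 \<le> n" shows "PF n \<eta> n = rm (sum \<eta> {1..n})"
  using assms unfolding PF_def by simp

lemma MF_pair: assumes "1 \<le> i" "2*i \<le> n" shows "MF n \<eta> (2*i-1) = MF n \<eta> (2*i)"
proof -
  have e: "{2*i-1<..n} = insert (2*i) {2*i<..n}" using assms by auto
  have c: "1 \<le> 2*i-1" "2*i-1 \<le> n" "odd (2*i-1)" "1 \<le> 2*i" "even (2*i)" using assms by auto
  show ?thesis using assms c unfolding MF_def e by (simp add: add.commute add.left_commute)
qed

lemma MF_last: assumes "odd n" shows "MF n \<eta> n = rm (sum \<eta> {1..n})"
  using assms unfolding MF_def by (cases n) auto

lemma l_r_eq: "l_r sc r = {(rp \<zeta>, rm \<zeta>) | \<zeta>. \<zeta> \<in> D}"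
proof -
  have TT: "(\<lambda>\<xi>. rp \<xi> - rm \<xi>) = T" by (rule ext) (simp add: T_eq)
  have rf: "rflat_plus sc r x = rp (Tinv x)" "rflat_minus sc r x = rm (Tinv x)" for x
    unfolding rflat_plus_def rflat_minus_def TT Tinv_def by simp_all
  show ?thesis
  proof (rule set_eqI)
    fix p
    show "p \<in> l_r sc r \<longleftrightarrow> p \<in> {(rp \<zeta>, rm \<zeta>) | \<zeta>. \<zeta> \<in> D}"
    proof
      assume "p \<in> l_r sc r"
      then obtain x where "p = (rflat_plus sc r x, rflat_minus sc r x)" unfolding l_r_def by blast
      then have "p = (rp (Tinv x), rm (Tinv x))" by (simp only: rf)
      then show "p \<in> {(rp \<zeta>, rm \<zeta>) | \<zeta>. \<zeta> \<in> D}" using Tinv(1)[of x] by blast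
    next
      assume "p \<in> {(rp \<zeta>, rm \<zeta>) | \<zeta>. \<zeta> \<in> D}"
      then obtain \<zeta> where z: "\<zeta> \<in> D" "p = (rp \<zeta>, rm \<zeta>)" by blast
      then have "p = (rflat_plus sc r (T \<zeta>), rflat_minus sc r (T \<zeta>))" by (simp only: rf Tinv_T)
      then show "p \<in> l_r sc r" unfolding l_r_def by blast
    qed
  qed
qed

end



context LS begin

lemma odd_plus: assumes n: "n = 2*m+1"
  shows "PF n ` Dn n = {v \<in> gn n. v 1 \<in> rp ` D \<and> (\<forall>i\<in>{1..m}. v (2*i) = v (2*i+1))}"
proof
  show "PF n ` Dn n \<subseteq> {v \<in> gn n. v 1 \<in> rp ` D \<and> (\<forall>i\<in>{1..m}. v (2*i) = v (2*i+1))}"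
  proof
    fix v assume "v \<in> PF n ` Dn n"
    then obtain \<eta> where e: "\<eta> \<in> Dn n" "v = PF n \<eta>" by blast
    have "v 1 \<in> rp ` D" using e PF_1[of n \<eta>] SD[OF e(1)] n by auto
    moreover have "\<forall>i\<in>{1..m}. v (2*i) = v (2*i+1)" using e PF_pair n by auto
    ultimately show "v \<in> {v \<in> gn n. v 1 \<in> rp ` D \<and> (\<forall>i\<in>{1..m}. v (2*i) = v (2*i+1))}"
      using e PF_gn by blast
  qed
  show "{v \<in> gn n. v 1 \<in> rp ` D \<and> (\<forall>i\<in>{1..m}. v (2*i) = v (2*i+1))} \<subseteq> PF n ` Dn n"
  proof
    fix v assume v: "v \<in> {v \<in> gn n. v 1 \<in> rp ` D \<and> (\<forall>i\<in>{1..m}. v (2*i) = v (2*i+1))}"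
    then obtain \<zeta> where z: "\<zeta> \<in> D" "v 1 = rp \<zeta>" by blast
    define u where "u l = (if l = 0 then v 1 else if l = Suc m then rm \<zeta> else v (2*l))" for l
    obtain \<eta> where e: "\<eta> \<in> Dn n" "\<forall>k\<in>{1..n}. PF n \<eta> k = u (k div 2)"
      using plus_constr[of \<zeta> u "Suc m" n] z n by (auto simp: u_def)
    have "PF n \<eta> = v"
    proof
      fix k
      show "PF n \<eta> k = v k"
      proof (cases "k \<in> {1..n}")
        case False
        then have o: "k < 1 \<or> n < k" by auto
        then have "v k = 0" "PF n \<eta> k = 0" using v PF_gn[of n \<eta>] unfolding gn_def by blast+
        then show ?thesis by simp
      next
        case True
        then have pk: "PF n \<eta> k = u (k div 2)" using e by blast
        show ?thesis
        proof (cases "k = 1")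
          case True then show ?thesis using pk by (simp add: u_def)
        next
          case False
          define l where "l = k div 2"
          have l: "1 \<le> l" "l \<le> m" using \<open>k \<in> {1..n}\<close> False n by (auto simp: l_def)
          then have ul: "u l = v (2*l)" by (simp add: u_def)
          show ?thesis
          proof (cases "even k")
            case True
            then have "k = 2*l" by (simp add: l_def)
            then show ?thesis using pk ul l_def by simp
          next
            case False
            then have "k = 2*l+1" by (simp add: l_def)
            then show ?thesis using pk ul l_def v l by auto
          qed
        qed
      qed
    qed
    then show "v \<in> PF n ` Dn n" using e by blast
  qed
qed

lemma minus_gen: assumes n: "2*m \<le> n" "n \<le> 2*m+1" "1 \<le> n" and z: "\<zeta> \<in> D"
  and v: "v \<in> gn n" "\<forall>i\<in>{1..m}. v (2*i-1) = v (2*i)" "odd n \<Longrightarrow> v n = rm \<zeta>"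
  and z0: "even n \<Longrightarrow> \<zeta> = 0"
  shows "v \<in> MF n ` Dn n"
proof -
  define u where "u l = (if l = Suc m then rm \<zeta> else v (2*l))" for l
  obtain \<eta> where e: "\<eta> \<in> Dn n" "\<forall>k\<in>{1..n}. MF n \<eta> k = u ((k+1) div 2)"
    using minus_constr[of \<zeta> u m n] z n by (auto simp: u_def)
  have "MF n \<eta> = v"
  proof
    fix k
    show "MF n \<eta> k = v k"
    proof (cases "k \<in> {1..n}")
      case False
      then have o: "k < 1 \<or> n < k" by auto
      then have "v k = 0" "MF n \<eta> k = 0" using v MF_gn[of n \<eta>] unfolding gn_def by blast+
      then show ?thesis by simp
    next
      case True
      then have pk: "MF n \<eta> k = u ((k+1) div 2)" using e by blast
      define l where "l = (k+1) div 2"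
      have l: "1 \<le> l" "l \<le> Suc m" using True n by (auto simp: l_def)
      show ?thesis
      proof (cases "l = Suc m")
        case True
        have hk: "k \<le> n" "1 \<le> k" using \<open>k \<in> {1..n}\<close> by auto
        have "k = n \<and> odd n" using hk n(1,2) True unfolding l_def by presburger
        then have "k = n" "odd n" by auto
        then show ?thesis using pk True v(3) z0 by (simp add: u_def l_def)
      next
        case False
        then have ul: "u l = v (2*l)" by (simp add: u_def)
        have lm: "l \<in> {1..m}" using l False by auto
        show ?thesis
        proof (cases "even k")
          case True
          then have "k = 2*l" by (simp add: l_def)
          then show ?thesis using pk ul l_def by simp
        next
          case False
          then have "k = 2*l-1" using l by (simp add: l_def)
          moreover have "v (2*l-1) = v (2*l)" using v(2) lm by blast
          moreover have "MF n \<eta> k = u l" using pk l_def by simp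
          ultimately show ?thesis using ul by simp
        qed
      qed
    qed
  qed
  then show ?thesis using e by blast
qed

lemma odd_minus: assumes n: "n = 2*m+1"
  shows "MF n ` Dn n = {v \<in> gn n. (\<forall>i\<in>{1..m}. v (2*i-1) = v (2*i)) \<and> v (2*m+1) \<in> rm ` D}"
proof
  show "MF n ` Dn n \<subseteq> {v \<in> gn n. (\<forall>i\<in>{1..m}. v (2*i-1) = v (2*i)) \<and> v (2*m+1) \<in> rm ` D}"
  proof
    fix v assume "v \<in> MF n ` Dn n"
    then obtain \<eta> where e: "\<eta> \<in> Dn n" "v = MF n \<eta>" by blast
    have "v (2*m+1) \<in> rm ` D" using e MF_last[of n \<eta>] SD[OF e(1)] n by auto
    moreover have "\<forall>i\<in>{1..m}. v (2*i-1) = v (2*i)" using e MF_pair n by auto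
    ultimately show "v \<in> {v \<in> gn n. (\<forall>i\<in>{1..m}. v (2*i-1) = v (2*i)) \<and> v (2*m+1) \<in> rm ` D}"
      using e MF_gn by blast
  qed
  show "{v \<in> gn n. (\<forall>i\<in>{1..m}. v (2*i-1) = v (2*i)) \<and> v (2*m+1) \<in> rm ` D} \<subseteq> MF n ` Dn n"
  proof
    fix v assume v: "v \<in> {v \<in> gn n. (\<forall>i\<in>{1..m}. v (2*i-1) = v (2*i)) \<and> v (2*m+1) \<in> rm ` D}"
    then obtain \<zeta> where z: "\<zeta> \<in> D" "v n = rm \<zeta>" using n by blast
    show "v \<in> MF n ` Dn n"
      by (rule minus_gen[of m n \<zeta>]) (use n z v in auto)
  qed
qed

lemma even_minus: assumes n: "n = 2*m" "1 \<le> m"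
  shows "MF n ` Dn n = {v \<in> gn n. \<forall>i\<in>{1..m}. v (2*i-1) = v (2*i)}"
proof
  show "MF n ` Dn n \<subseteq> {v \<in> gn n. \<forall>i\<in>{1..m}. v (2*i-1) = v (2*i)}"
    using MF_pair MF_gn n by auto
  show "{v \<in> gn n. \<forall>i\<in>{1..m}. v (2*i-1) = v (2*i)} \<subseteq> MF n ` Dn n"
  proof
    fix v :: "nat \<Rightarrow> 'g" assume v: "v \<in> {v \<in> gn n. \<forall>i\<in>{1..m}. v (2*i-1) = v (2*i)}"
    show "v \<in> MF n ` Dn n"
      by (rule minus_gen[of m n 0]) (use n v D_zero in auto)
  qed
qed


lemma even_plus: assumes n: "n = 2*m" "1 \<le> m"
  shows "PF n ` Dn n = tau n ` {w \<in> gn n. (w 1, w 2) \<in> l_r sc r \<and> (\<forall>i\<in>{2..m}. w (2*i-1) = w (2*i))}"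
proof
  show "PF n ` Dn n \<subseteq> tau n ` {w \<in> gn n. (w 1, w 2) \<in> l_r sc r \<and> (\<forall>i\<in>{2..m}. w (2*i-1) = w (2*i))}"
  proof
    fix v assume "v \<in> PF n ` Dn n"
    then obtain \<eta> where e: "\<eta> \<in> Dn n" "v = PF n \<eta>" by blast
    define w where "w k = (if k = 1 then v 1 else if k = 2 then v n else if 3 \<le> k \<and> k \<le> n then v (k - 1) else 0)" for k
    have vg: "v \<in> gn n" using e PF_gn by simp
    have wg: "w \<in> gn n" using n by (auto simp: gn_def w_def)
    have "(w 1, w 2) = (rp (sum \<eta> {1..n}), rm (sum \<eta> {1..n}))"
      using e n PF_1[of n \<eta>] PF_last[of n \<eta>] by (simp add: w_def)
    then have wl: "(w 1, w 2) \<in> l_r sc r" unfolding l_r_eq using SD[OF e(1)] by blast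
    have wp: "\<forall>i\<in>{2..m}. w (2*i-1) = w (2*i)"
    proof
      fix i assume i: "i \<in> {2..m}"
      have a1: "2*i-1-1 = 2*(i-1)" "2*i-1 = 2*(i-1)+1" using i by auto
      have "w (2*i-1) = v (2*i-1-1)" "w (2*i) = v (2*i-1)" using i n by (auto simp: w_def)
      then have "w (2*i-1) = v (2*(i-1))" "w (2*i) = v (2*(i-1)+1)" using a1 by metis+
      moreover have "PF n \<eta> (2*(i-1)) = PF n \<eta> (2*(i-1)+1)" by (rule PF_pair) (use i n in auto)
      ultimately show "w (2*i-1) = w (2*i)" using e by simp
    qed
    have "tau n w = v"
    proof
      fix k
      show "tau n w k = v k"
      proof (cases "k = 1")
        case True then show ?thesis by (simp add: tau_def w_def)
      next
        case k1: False
        show ?thesis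
        proof (cases "2 \<le> k \<and> k < n")
          case True then show ?thesis using k1 by (simp add: tau_def w_def)
        next
          case k2: False
          show ?thesis
          proof (cases "k = n")
            case True then show ?thesis using k1 n by (simp add: tau_def w_def)
          next
            case False
            then have "k < 1 \<or> n < k" using k1 k2 n by auto
            then have "v k = 0" using vg unfolding gn_def by blast
            then show ?thesis using k1 k2 False by (auto simp: tau_def)
          qed
        qed
      qed
    qed
    then show "v \<in> tau n ` {w \<in> gn n. (w 1, w 2) \<in> l_r sc r \<and> (\<forall>i\<in>{2..m}. w (2*i-1) = w (2*i))}"
      using wg wl wp by blast
  qed
  show "tau n ` {w \<in> gn n. (w 1, w 2) \<in> l_r sc r \<and> (\<forall>i\<in>{2..m}. w (2*i-1) = w (2*i))} \<subseteq> PF n ` Dn n"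
  proof
    fix v assume "v \<in> tau n ` {w \<in> gn n. (w 1, w 2) \<in> l_r sc r \<and> (\<forall>i\<in>{2..m}. w (2*i-1) = w (2*i))}"
    then obtain w where w: "w \<in> gn n" "(w 1, w 2) \<in> l_r sc r" "\<forall>i\<in>{2..m}. w (2*i-1) = w (2*i)"
      and vw: "v = tau n w" by blast
    obtain \<zeta> where z: "\<zeta> \<in> D" "w 1 = rp \<zeta>" "w 2 = rm \<zeta>" using w(2) unfolding l_r_eq by blast
    define u where "u l = (if l = 0 then w 1 else if l = m then w 2 else w (2*l+1))" for l
    obtain \<eta> where e: "\<eta> \<in> Dn n" "\<forall>k\<in>{1..n}. PF n \<eta> k = u (k div 2)"
      using plus_constr[of \<zeta> u m n] z n by (auto simp: u_def)
    have "PF n \<eta> = v"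
    proof
      fix k
      show "PF n \<eta> k = v k"
      proof (cases "k \<in> {1..n}")
        case False
        then have o: "k < 1 \<or> n < k" by auto
        then have "PF n \<eta> k = 0" using PF_gn[of n \<eta>] unfolding gn_def by blast
        moreover have "v k = 0" using o n unfolding vw tau_def by auto
        ultimately show ?thesis by simp
      next
        case True
        then have pk: "PF n \<eta> k = u (k div 2)" using e by blast
        show ?thesis
        proof (cases "k = 1")
          case True then show ?thesis using pk by (simp add: u_def vw tau_def)
        next
          case k1: False
          show ?thesis
          proof (cases "k = n")
            case True
            then have "k div 2 = m" "\<not> (2 \<le> k \<and> k < n)" using n by auto
            then show ?thesis using pk k1 True n by (simp add: u_def vw tau_def)
          next
            case False
            then have k2: "2 \<le> k" "k < n" using k1 \<open>k \<in> {1..n}\<close> by auto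
            define l where "l = k div 2"
            have l: "1 \<le> l" "l < m" using k2 n by (auto simp: l_def)
            have ul: "u l = w (2*l+1)" using l by (simp add: u_def)
            have vk: "v k = w (k+1)" using k1 k2 by (simp add: vw tau_def)
            show ?thesis
            proof (cases "even k")
              case True
              then have "k = 2*l" by (simp add: l_def)
              then show ?thesis using pk ul vk l_def by simp
            next
              case False
              then have kk: "k = 2*l+1" by (simp add: l_def)
              have "l+1 \<in> {2..m}" using l by auto
              then have "w (2*(l+1)-1) = w (2*(l+1))" using w(3) by blast
              then have "w (2*l+1) = w (k+1)" using kk by simp
              then show ?thesis using pk ul vk l_def by simp
            qed
          qed
        qed
      qed
    qed
    then show "v \<in> PF n ` Dn n" using e by blast
  qed
qed

end



theorem lemma5p1:
  fixes sc :: "'k::field \<Rightarrow> 'g::ab_group_add \<Rightarrow> 'g"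
    and br :: "'g \<Rightarrow> 'g \<Rightarrow> 'g"
    and r :: "('g \<times> 'g) list"
    and n :: nat
  assumes "lie_algebra sc br"
    and "factorizable sc br r"
    and "n \<ge> 1"
  shows "(\<forall>m. n = 2 * m \<longrightarrow>
            fplus_n sc n r = tau n ` {w \<in> gn n. (w 1, w 2) \<in> l_r sc r \<and>
                                     (\<forall>i\<in>{2..m}. w (2 * i - 1) = w (2 * i))}
          \<and> fminus_n sc n r = {v \<in> gn n. \<forall>i\<in>{1..m}. v (2 * i - 1) = v (2 * i)})
       \<and> (\<forall>m. n = 2 * m + 1 \<longrightarrow>
            fplus_n sc n r = {v \<in> gn n. v 1 \<in> fplus sc r \<and>
                                     (\<forall>i\<in>{1..m}. v (2 * i) = v (2 * i + 1))}
          \<and> fminus_n sc n r = {v \<in> gn n. (\<forall>i\<in>{1..m}. v (2 * i - 1) = v (2 * i)) \<and>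
                                     v (2 * m + 1) \<in> fminus sc r})"
proof -
  have vs: "vector_space sc" using assms(1) unfolding lie_algebra_def by blast
  have bj: "bij_betw (tplus sc (r @ flip21 r)) (dual sc) UNIV" using assms(2) unfolding factorizable_def by blast
  interpret LS sc r by (rule LS.intro[OF vs bj])
  show ?thesis
  proof (intro conjI allI impI)
    fix m assume n: "n = 2 * m"
    then have m: "1 \<le> m" using assms(3) by auto
    show "fplus_n sc n r = tau n ` {w \<in> gn n. (w 1, w 2) \<in> l_r sc r \<and>
                                     (\<forall>i\<in>{2..m}. w (2 * i - 1) = w (2 * i))}"
      unfolding fplus_PF using even_plus[OF n m] .
    show "fminus_n sc n r = {v \<in> gn n. \<forall>i\<in>{1..m}. v (2 * i - 1) = v (2 * i)}"
      unfolding fminus_MF using even_minus[OF n m] .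
  next
    fix m assume n: "n = 2 * m + 1"
    show "fplus_n sc n r = {v \<in> gn n. v 1 \<in> fplus sc r \<and>
                                     (\<forall>i\<in>{1..m}. v (2 * i) = v (2 * i + 1))}"
      unfolding fplus_PF fplus_def using odd_plus[OF n] .
    show "fminus_n sc n r = {v \<in> gn n. (\<forall>i\<in>{1..m}. v (2 * i - 1) = v (2 * i)) \<and>
                                     v (2 * m + 1) \<in> fminus sc r}"
      unfolding fminus_MF fminus_def using odd_minus[OF n] .
  qed
qed


end
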